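(* Let $\mathbb K$ be a field with $2\in\mathbb K^\times$, $A$ a unital commutative associative $\mathbb K$-algebra with unit $\mathbf 1$, $\mathfrak k$ a $\mathbb K$-Lie algebra, $\mathfrak g=A\otimes\mathfrak k$, and $\mathfrak z$ a $\mathbb K$-vector space. Let $f_1:\Lambda^2(A)\otimes S^2(\mathfrak k)\to\mathfrak z$, $f_2:A\otimes\Lambda^2(\mathfrak k)\to\mathfrak z$, $f_3:I_A\otimes\Lambda^2(\mathfrak k)\to\mathfrak z$ be linear. Then $f=f_1\circ p_1+f_2\circ p_2+f_3\circ p_3:\Lambda^2(\mathfrak g)\to\mathfrak z$ is a 2-cocycle if and only if: (a) $\tilde f_1(a,b)$ is an invariant symmetric bilinear map for all $a,b\in A$; (b) for every $t\in T_0(A)$, $\tilde f_1(t)(x,y)=0$ for all $x\in\mathfrak k$, $y\in\mathfrak k'$; (c) $d_{\mathfrak k}(\tilde f_2(a))=\Gamma(\tilde f_1(a,\mathbf 1))$ for every $a\in A$; (d) for every $c\in I_A$, $\tilde f_3(c)(x,y)=0$ for all $x\in\mathfrak k$, $y\in\mathfrak k'$.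
   Context: $\mathfrak g$ has bracket $[a\otimes x,a'\otimes x']=aa'\otimes[x,x']$; write $ax=a\otimes x$; $\mathfrak k'=[\mathfrak k,\mathfrak k]$. $\Lambda^2(V)$, $S^2(V)$ are identified with antisymmetric/symmetric tensors via $v\wedge w=\tfrac12(v\otimes w-w\otimes v)$, $v\vee w=\tfrac12(v\otimes w+w\otimes v)$. $I_A\subseteq S^2(A)$ is the kernel of the multiplication map $S^2(A)\to A$. The linear maps $p_1(ax\wedge by)=a\wedge b\otimes x\vee y\in\Lambda^2(A)\otimes S^2(\mathfrak k)$, $p_2(ax\wedge by)=ab\otimes x\wedge y\in A\otimes\Lambda^2(\mathfrak k)$, $p_3(ax\wedge by)=(a\vee b-ab\vee\mathbf 1)\otimes x\wedge y\in I_A\otimes\Lambda^2(\mathfrak k)$ together give a linear isomorphism of $\Lambda^2(\mathfrak g)$ onto the direct sum of the three spaces. A 2-cocycle is a linear map $f:\Lambda^2(\mathfrak g)\to\mathfrak z$ vanishing on $B_2(\mathfrak g)=\mathrm{im}\,\partial$, where $\partial(u\wedge v\wedge w)=[u,v]\wedge w+[v,w]\wedge u+[w,u]\wedge v$. Set $\tilde f_1(a,b)(x,y):=f_1(a\wedge b\otimes x\vee y)$ (extended linearly to $\Lambda^2(A)$), $\tilde f_2(a)(x,y):=f_2(a\otimes x\wedge y)$, $\tilde f_3(c)(x,y):=f_3(c\otimes x\wedge y)$. A symmetric bilinear $\kappa:\mathfrak k\times\mathfrak k\to\mathfrak z$ is invariant if $\kappa([x,y],z)=\kappa(x,[y,z])$;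 for such $\kappa$, $\Gamma(\kappa)(x,y,z):=\kappa([x,y],z)$. $T_0(A)\subseteq\Lambda^2(A)$ is the span of $ab\wedge c+bc\wedge a+ca\wedge b-abc\wedge\mathbf 1$, $a,b,c\in A$. For alternating bilinear $\eta:\mathfrak k\times\mathfrak k\to\mathfrak z$, $(d_{\mathfrak k}\eta)(x,y,z)=-\eta([x,y],z)+\eta([x,z],y)-\eta([y,z],x)$. *)

theory Defs
  imports Complex_Main
begin

definition bilinear_map ::
  "('f::field \<Rightarrow> 'u::ab_group_add \<Rightarrow> 'u) \<Rightarrow> ('f \<Rightarrow> 'v::ab_group_add \<Rightarrow> 'v)
   \<Rightarrow> ('f \<Rightarrow> 'w::ab_group_add \<Rightarrow> 'w) \<Rightarrow> ('u \<Rightarrow> 'v \<Rightarrow> 'w) \<Rightarrow> bool" where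
  "bilinear_map s1 s2 s3 B \<longleftrightarrow>
     (\<forall>x. Vector_Spaces.linear s2 s3 (B x)) \<and> (\<forall>y. Vector_Spaces.linear s1 s3 (\<lambda>x. B x y))"

definition linear_on ::
  "('f::field \<Rightarrow> 'u::ab_group_add \<Rightarrow> 'u) \<Rightarrow> ('f \<Rightarrow> 'w::ab_group_add \<Rightarrow> 'w)
   \<Rightarrow> 'u set \<Rightarrow> ('u \<Rightarrow> 'w) \<Rightarrow> bool" where
  "linear_on s1 s2 J f \<longleftrightarrow> module.subspace s1 J \<and>
     (\<forall>x\<in>J. \<forall>y\<in>J. f (x + y) = f x + f y) \<and> (\<forall>c. \<forall>x\<in>J. f (s1 c x) = s2 c (f x))"

text \<open>Since the target
  is a vector space over a field, universality for all bilinear maps is equivalent to: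
  t is bilinear, its image spans T, and every scalar-valued bilinear form on U \<times> V
  factors linearly through t (linear functionals separate points).\<close>
definition is_tensor_product ::
  "('f::field \<Rightarrow> 'u::ab_group_add \<Rightarrow> 'u) \<Rightarrow> ('f \<Rightarrow> 'v::ab_group_add \<Rightarrow> 'v)
   \<Rightarrow> ('f \<Rightarrow> 't::ab_group_add \<Rightarrow> 't) \<Rightarrow> ('u \<Rightarrow> 'v \<Rightarrow> 't) \<Rightarrow> bool" where
  "is_tensor_product s1 s2 s3 t \<longleftrightarrow>
     vector_space s1 \<and> vector_space s2 \<and> vector_space s3 \<and>
     bilinear_map s1 s2 s3 t \<and>
     module.span s3 {t x y | x y. True} = UNIV \<and>
     (\<forall>\<phi>::'u \<Rightarrow> 'v \<Rightarrow> 'f. bilinear_map s1 s2 (*) \<phi> \<longrightarrow>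
        (\<exists>L. Vector_Spaces.linear s3 (*) L \<and> (\<forall>x y. L (t x y) = \<phi> x y)))"

definition is_exterior_square ::
  "('f::field \<Rightarrow> 'u::ab_group_add \<Rightarrow> 'u) \<Rightarrow> ('f \<Rightarrow> 't::ab_group_add \<Rightarrow> 't)
   \<Rightarrow> ('u \<Rightarrow> 'u \<Rightarrow> 't) \<Rightarrow> bool" where
  "is_exterior_square s1 s3 w \<longleftrightarrow>
     vector_space s1 \<and> vector_space s3 \<and>
     bilinear_map s1 s1 s3 w \<and> (\<forall>x y. w y x = - w x y) \<and>
     module.span s3 {w x y | x y. True} = UNIV \<and>
     (\<forall>\<phi>::'u \<Rightarrow> 'u \<Rightarrow> 'f. bilinear_map s1 s1 (*) \<phi> \<longrightarrow> (\<forall>x y. \<phi> y x = - \<phi> x y) \<longrightarrow>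
        (\<exists>L. Vector_Spaces.linear s3 (*) L \<and> (\<forall>x y. L (w x y) = \<phi> x y)))"

definition is_symmetric_square ::
  "('f::field \<Rightarrow> 'u::ab_group_add \<Rightarrow> 'u) \<Rightarrow> ('f \<Rightarrow> 't::ab_group_add \<Rightarrow> 't)
   \<Rightarrow> ('u \<Rightarrow> 'u \<Rightarrow> 't) \<Rightarrow> bool" where
  "is_symmetric_square s1 s3 v \<longleftrightarrow>
     vector_space s1 \<and> vector_space s3 \<and>
     bilinear_map s1 s1 s3 v \<and> (\<forall>x y. v y x = v x y) \<and>
     module.span s3 {v x y | x y. True} = UNIV \<and>
     (\<forall>\<phi>::'u \<Rightarrow> 'u \<Rightarrow> 'f. bilinear_map s1 s1 (*) \<phi> \<longrightarrow> (\<forall>x y. \<phi> y x = \<phi> x y) \<longrightarrow>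
        (\<exists>L. Vector_Spaces.linear s3 (*) L \<and> (\<forall>x y. L (v x y) = \<phi> x y)))"

definition lie_algebra ::
  "('f::field \<Rightarrow> 'k::ab_group_add \<Rightarrow> 'k) \<Rightarrow> ('k \<Rightarrow> 'k \<Rightarrow> 'k) \<Rightarrow> bool" where
  "lie_algebra s br \<longleftrightarrow> vector_space s \<and> bilinear_map s s s br \<and> (\<forall>x. br x x = 0) \<and>
     (\<forall>x y z. br x (br y z) + br y (br z x) + br z (br x y) = 0)"

definition comm_algebra :: "('f::field \<Rightarrow> 'a::comm_ring_1 \<Rightarrow> 'a) \<Rightarrow> bool" where
  "comm_algebra s \<longleftrightarrow> vector_space s \<and> (\<forall>c a b. s c (a * b) = s c a * b)"

definition derived_algebra :: "('f::field \<Rightarrow> 'k::ab_group_add \<Rightarrow> 'k) \<Rightarrow> ('k \<Rightarrow> 'k \<Rightarrow> 'k) \<Rightarrow> 'k set" where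
  "derived_algebra s br = module.span s {br x y | x y. True}"

definition invariant_symmetric_bilinear ::
  "('f::field \<Rightarrow> 'k::ab_group_add \<Rightarrow> 'k) \<Rightarrow> ('f \<Rightarrow> 'z::ab_group_add \<Rightarrow> 'z)
   \<Rightarrow> ('k \<Rightarrow> 'k \<Rightarrow> 'k) \<Rightarrow> ('k \<Rightarrow> 'k \<Rightarrow> 'z) \<Rightarrow> bool" where
  "invariant_symmetric_bilinear sk sz br \<kappa> \<longleftrightarrow>
     bilinear_map sk sk sz \<kappa> \<and> (\<forall>x y. \<kappa> x y = \<kappa> y x) \<and>
     (\<forall>x y z. \<kappa> (br x y) z = \<kappa> x (br y z))"

definition Gamma :: "('k \<Rightarrow> 'k \<Rightarrow> 'k) \<Rightarrow> ('k \<Rightarrow> 'k \<Rightarrow> 'z) \<Rightarrow> 'k \<Rightarrow> 'k \<Rightarrow> 'k \<Rightarrow> 'z" where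
  "Gamma br \<kappa> x y z = \<kappa> (br x y) z"

definition d_k :: "('k \<Rightarrow> 'k \<Rightarrow> 'k) \<Rightarrow> ('k \<Rightarrow> 'k \<Rightarrow> 'z::ab_group_add) \<Rightarrow> 'k \<Rightarrow> 'k \<Rightarrow> 'k \<Rightarrow> 'z" where
  "d_k br \<eta> x y z = - \<eta> (br x y) z + \<eta> (br x z) y - \<eta> (br y z) x"

text \<open>B_2(g) = im \<partial>, where \<partial>(u\<and>v\<and>w) = [u,v]\<and>w + [v,w]\<and>u + [w,u]\<and>v; since \<Lambda>^3(g) is spanned
  by the u\<and>v\<and>w and \<partial> is linear, im \<partial> is the span of these elements.\<close>
definition B2 :: "('f::field \<Rightarrow> 'w::ab_group_add \<Rightarrow> 'w) \<Rightarrow> ('g \<Rightarrow> 'g \<Rightarrow> 'w) \<Rightarrow> ('g \<Rightarrow> 'g \<Rightarrow> 'g) \<Rightarrow> 'w set" where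
  "B2 sw wg bg = module.span sw
     {wg (bg u v) w + wg (bg v w) u + wg (bg w u) v | u v w. True}"

definition two_cocycle ::
  "('f::field \<Rightarrow> 'w::ab_group_add \<Rightarrow> 'w) \<Rightarrow> ('f \<Rightarrow> 'z::ab_group_add \<Rightarrow> 'z)
   \<Rightarrow> ('g \<Rightarrow> 'g \<Rightarrow> 'w) \<Rightarrow> ('g \<Rightarrow> 'g \<Rightarrow> 'g) \<Rightarrow> ('w \<Rightarrow> 'z) \<Rightarrow> bool" where
  "two_cocycle sw sz wg bg f \<longleftrightarrow> Vector_Spaces.linear sw sz f \<and> (\<forall>u\<in>B2 sw wg bg. f u = 0)"

definition T0 :: "('f::field \<Rightarrow> 'l::ab_group_add \<Rightarrow> 'l) \<Rightarrow> ('a::comm_ring_1 \<Rightarrow> 'a \<Rightarrow> 'l) \<Rightarrow> 'l set" where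
  "T0 sl wA = module.span sl
     {wA (a * b) c + wA (b * c) a + wA (c * a) b - wA (a * b * c) 1 | a b c. True}"

end

theory Submission
  imports Defs
begin


lemma lin_add: "Vector_Spaces.linear s1 s2 f \<Longrightarrow> f (x + y) = f x + f y"
  by (simp add: Vector_Spaces.linear_iff)
lemma lin_scale: "Vector_Spaces.linear s1 s2 f \<Longrightarrow> f (s1 c x) = s2 c (f x)"
  by (simp add: Vector_Spaces.linear_iff)
lemma lin_neg: "Vector_Spaces.linear s1 s2 f \<Longrightarrow> f (- x) = - f x"
  by (simp add: linear_iff_module_hom module_hom.neg)
lemma lin_diff: "Vector_Spaces.linear s1 s2 f \<Longrightarrow> f (x - y) = f x - f y"
  by (simp add: linear_iff_module_hom module_hom.diff)
lemma lin_zero: "Vector_Spaces.linear s1 s2 f \<Longrightarrow> f 0 = 0"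
  by (simp add: linear_iff_module_hom module_hom.zero)
lemma lin_vs1: "Vector_Spaces.linear s1 s2 f \<Longrightarrow> vector_space s1"
  by (simp add: Vector_Spaces.linear_iff)
lemma lin_vs2: "Vector_Spaces.linear s1 s2 f \<Longrightarrow> vector_space s2"
  by (simp add: Vector_Spaces.linear_iff)
lemma lin_comp: "Vector_Spaces.linear s1 s2 f \<Longrightarrow> Vector_Spaces.linear s2 s3 g \<Longrightarrow>
   Vector_Spaces.linear s1 s3 (\<lambda>x. g (f x))"
  using Vector_Spaces.linear_compose[of s1 s2 f s3 g] by (simp add: o_def)
lemma lin_plus: "Vector_Spaces.linear s1 s2 f \<Longrightarrow> Vector_Spaces.linear s1 s2 g \<Longrightarrow>
   Vector_Spaces.linear s1 s2 (\<lambda>x. f x + g x)"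
  unfolding Vector_Spaces.linear_iff by (auto simp: module.scale_right_distrib algebra_simps
     module_iff_vector_space[symmetric])

lemma bil_L: "bilinear_map s1 s2 s3 B \<Longrightarrow> Vector_Spaces.linear s1 s3 (\<lambda>x. B x y)"
  by (simp add: bilinear_map_def)
lemma bil_R: "bilinear_map s1 s2 s3 B \<Longrightarrow> Vector_Spaces.linear s2 s3 (\<lambda>y. B x y)"
  by (simp add: bilinear_map_def)

lemma span_lin_mem:
  assumes L: "Vector_Spaces.linear s1 s2 L" and G: "module.span s1 G = UNIV"
    and Q: "module.subspace s2 Q" and gen: "\<And>g. g \<in> G \<Longrightarrow> L g \<in> Q"
  shows "L u \<in> Q"
proof -
  interpret Vector_Spaces.linear s1 s2 L by fact
  have "u \<in> vs1.span G" using G by simp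
  then show ?thesis
  proof (induct rule: vs1.span_induct)
    case base
    show ?case using subspace_linear_preimage[OF Q] by simp
  next
    case (step x) then show ?case using gen by simp
  qed
qed

lemma span_bilin_mem:
  assumes L1: "\<And>v. Vector_Spaces.linear s1 s2 (\<lambda>u. T u v)"
    and L2: "\<And>u. Vector_Spaces.linear s1 s2 (\<lambda>v. T u v)"
    and G: "module.span s1 G = UNIV" and Q: "module.subspace s2 Q"
    and gen: "\<And>g h. g \<in> G \<Longrightarrow> h \<in> G \<Longrightarrow> T g h \<in> Q"
  shows "T u v \<in> Q"
proof -
  have "\<And>h. h \<in> G \<Longrightarrow> T u h \<in> Q"
    using span_lin_mem[OF L1 G Q] gen by blast
  then show ?thesis using span_lin_mem[OF L2 G Q] by blast
qed

lemma span_trilin_mem: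
  assumes L1: "\<And>v w. Vector_Spaces.linear s1 s2 (\<lambda>u. T u v w)"
    and L2: "\<And>u w. Vector_Spaces.linear s1 s2 (\<lambda>v. T u v w)"
    and L3: "\<And>u v. Vector_Spaces.linear s1 s2 (\<lambda>w. T u v w)"
    and G: "module.span s1 G = UNIV" and Q: "module.subspace s2 Q"
    and gen: "\<And>g h k. g \<in> G \<Longrightarrow> h \<in> G \<Longrightarrow> k \<in> G \<Longrightarrow> T g h k \<in> Q"
  shows "T u v w \<in> Q"
proof -
  have "\<And>k. k \<in> G \<Longrightarrow> T u v k \<in> Q"
    using span_bilin_mem[OF L1 L2 G Q] gen by blast
  then show ?thesis using span_lin_mem[OF L3 G Q] by blast
qed

lemma span_lin_zero:
  assumes L: "Vector_Spaces.linear s1 s2 L" and u: "u \<in> module.span s1 G"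
    and gen: "\<And>g. g \<in> G \<Longrightarrow> L g = 0"
  shows "L u = 0"
proof -
  interpret Vector_Spaces.linear s1 s2 L by fact
  show ?thesis using eq_0_on_span[OF gen u] by simp
qed

lemma linear_on_extend:
  assumes f: "linear_on s1 s2 S f" and v1: "vector_space s1" and v2: "vector_space s2"
  shows "\<exists>F. Vector_Spaces.linear s1 s2 F \<and> (\<forall>x\<in>S. F x = f x)"
proof -
  interpret vector_space_pair s1 s2 using v1 v2 by (simp add: vector_space_pair_def)
  have S: "vs1.subspace S" and fa: "\<And>x y. x \<in> S \<Longrightarrow> y \<in> S \<Longrightarrow> f (x + y) = f x + f y"
    and fs: "\<And>c x. x \<in> S \<Longrightarrow> f (s1 c x) = s2 c (f x)"
    using f by (auto simp: linear_on_def)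
  obtain B where B: "B \<subseteq> S" "vs1.independent B" "S \<subseteq> vs1.span B"
    using vs1.maximal_independent_subset by blast
  obtain g where g: "Vector_Spaces.linear s1 s2 g" "\<forall>x\<in>B. g x = f x"
    using linear_independent_extend[OF B(2)] by blast
  have f0: "f 0 = 0"
  proof -
    have "f (s1 0 0) = s2 0 (f 0)" using fs vs1.subspace_0[OF S] by blast
    then show ?thesis by simp
  qed
  have "x \<in> S \<and> g x = f x" if x: "x \<in> vs1.span B" for x
    using x
  proof (induct rule: vs1.span_induct)
    case base
    show ?case unfolding vs1.subspace_def
      using vs1.subspace_0[OF S] vs1.subspace_add[OF S] vs1.subspace_scale[OF S]
        lin_zero[OF g(1)] f0 lin_add[OF g(1)] lin_scale[OF g(1)] fa fs by auto
  next
    case (step x) then show ?case using B g by auto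
  qed
  then show ?thesis using g B by blast
qed

lemma half_zero:
  fixes s :: "'f::field \<Rightarrow> 'b::ab_group_add \<Rightarrow> 'b"
  assumes "vector_space s" "(2::'f) \<noteq> 0" "v + v = (0::'b)"
  shows "v = 0"
proof -
  interpret vector_space s by fact
  have "s (1 + 1) v = v + v" using scale_left_distrib[of 1 1 v] by simp
  then have "s 2 v = 0" using assms(3) by simp
  then show ?thesis using assms(2) by simp
qed

lemma bil_addL: "bilinear_map s1 s2 s3 B \<Longrightarrow> B (x + x') y = B x y + B x' y"
  using lin_add[OF bil_L[of s1 s2 s3 B y]] by simp
lemma bil_addR: "bilinear_map s1 s2 s3 B \<Longrightarrow> B x (y + y') = B x y + B x y'"
  using lin_add[OF bil_R[of s1 s2 s3 B x]] by simp
lemma bil_negL: "bilinear_map s1 s2 s3 B \<Longrightarrow> B (- x) y = - B x y"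
  using lin_neg[OF bil_L[of s1 s2 s3 B y]] by simp
lemma bil_negR: "bilinear_map s1 s2 s3 B \<Longrightarrow> B x (- y) = - B x y"
  using lin_neg[OF bil_R[of s1 s2 s3 B x]] by simp
lemma bil_diffL: "bilinear_map s1 s2 s3 B \<Longrightarrow> B (x - x') y = B x y - B x' y"
  using lin_diff[OF bil_L[of s1 s2 s3 B y]] by simp
lemma bil_diffR: "bilinear_map s1 s2 s3 B \<Longrightarrow> B x (y - y') = B x y - B x y'"
  using lin_diff[OF bil_R[of s1 s2 s3 B x]] by simp
lemma bil_zeroL: "bilinear_map s1 s2 s3 B \<Longrightarrow> B 0 y = 0"
  using lin_zero[OF bil_L[of s1 s2 s3 B y]] by simp
lemma bil_zeroR: "bilinear_map s1 s2 s3 B \<Longrightarrow> B x 0 = 0"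
  using lin_zero[OF bil_R[of s1 s2 s3 B x]] by simp
lemma bil_scaleL: "bilinear_map s1 s2 s3 B \<Longrightarrow> B (s1 c x) y = s3 c (B x y)"
  using lin_scale[OF bil_L[of s1 s2 s3 B y]] by simp
lemma bil_scaleR: "bilinear_map s1 s2 s3 B \<Longrightarrow> B x (s2 c y) = s3 c (B x y)"
  using lin_scale[OF bil_R[of s1 s2 s3 B x]] by simp

lemma zero2: "A = 0 \<Longrightarrow> B = 0 \<Longrightarrow> G = A + B \<Longrightarrow> G = (0::'a::ab_group_add)" by simp
lemma zero2m: "A = 0 \<Longrightarrow> B = 0 \<Longrightarrow> G = A - B \<Longrightarrow> G = (0::'a::ab_group_add)" by simp
lemma zero3: "A = 0 \<Longrightarrow> B = 0 \<Longrightarrow> C = 0 \<Longrightarrow> G = A + B - C \<Longrightarrow> G = (0::'a::ab_group_add)" by simp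
lemma zero3c: "A = 0 \<Longrightarrow> B = 0 \<Longrightarrow> C = 0 \<Longrightarrow> G = A + B - (C + C) \<Longrightarrow> G = (0::'a::ab_group_add)" by simp
lemma eq_by: "A = 0 \<Longrightarrow> G - H = A \<Longrightarrow> G = (H::'a::ab_group_add)" by simp

lemma eq_byn: "A = 0 \<Longrightarrow> G - H = - A \<Longrightarrow> G = (H::'a::ab_group_add)" by (simp add: algebra_simps)


theorem theorem3p1:
  fixes sA :: "'f::field \<Rightarrow> 'a::comm_ring_1 \<Rightarrow> 'a"
    and sK :: "'f \<Rightarrow> 'k::ab_group_add \<Rightarrow> 'k" and bk :: "'k \<Rightarrow> 'k \<Rightarrow> 'k"
    and sZ :: "'f \<Rightarrow> 'z::ab_group_add \<Rightarrow> 'z"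
    and sG :: "'f \<Rightarrow> 'g::ab_group_add \<Rightarrow> 'g" and tg :: "'a \<Rightarrow> 'k \<Rightarrow> 'g"
    and bg :: "'g \<Rightarrow> 'g \<Rightarrow> 'g"
    and sW :: "'f \<Rightarrow> 'w::ab_group_add \<Rightarrow> 'w" and wg :: "'g \<Rightarrow> 'g \<Rightarrow> 'w"
    and sLA :: "'f \<Rightarrow> 'la::ab_group_add \<Rightarrow> 'la" and wA :: "'a \<Rightarrow> 'a \<Rightarrow> 'la"
    and sSK :: "'f \<Rightarrow> 'sk::ab_group_add \<Rightarrow> 'sk" and vK :: "'k \<Rightarrow> 'k \<Rightarrow> 'sk"
    and sLK :: "'f \<Rightarrow> 'lk::ab_group_add \<Rightarrow> 'lk" and wK :: "'k \<Rightarrow> 'k \<Rightarrow> 'lk"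
    and sSA :: "'f \<Rightarrow> 'sa::ab_group_add \<Rightarrow> 'sa" and vA :: "'a \<Rightarrow> 'a \<Rightarrow> 'sa"
    and mA :: "'sa \<Rightarrow> 'a"
    and sT1 :: "'f \<Rightarrow> 't1::ab_group_add \<Rightarrow> 't1" and tens1 :: "'la \<Rightarrow> 'sk \<Rightarrow> 't1"
    and sT2 :: "'f \<Rightarrow> 't2::ab_group_add \<Rightarrow> 't2" and tens2 :: "'a \<Rightarrow> 'lk \<Rightarrow> 't2"
    and sT3 :: "'f \<Rightarrow> 't3::ab_group_add \<Rightarrow> 't3" and tens3 :: "'sa \<Rightarrow> 'lk \<Rightarrow> 't3"
    and p1 :: "'w \<Rightarrow> 't1" and p2 :: "'w \<Rightarrow> 't2" and p3 :: "'w \<Rightarrow> 't3"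
    and f1 :: "'t1 \<Rightarrow> 'z" and f2 :: "'t2 \<Rightarrow> 'z" and f3 :: "'t3 \<Rightarrow> 'z"
  assumes two_unit: "(2::'f) \<noteq> 0"
    and A_alg: "comm_algebra sA"
    and k_lie: "lie_algebra sK bk"
    and z_vs: "vector_space sZ"
    \<comment> \<open>g = A \<otimes> k with bracket [a x, a' x'] = a a' [x,x']\<close>
    and g_tensor: "is_tensor_product sA sK sG tg"
    and bg_bil: "bilinear_map sG sG sG bg"
    and bg_tg: "\<And>a b x y. bg (tg a x) (tg b y) = tg (a * b) (bk x y)"
    \<comment> \<open>the exterior and symmetric squares\<close>
    and W_ext: "is_exterior_square sG sW wg"
    and LA_ext: "is_exterior_square sA sLA wA"
    and SK_sym: "is_symmetric_square sK sSK vK"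
    and LK_ext: "is_exterior_square sK sLK wK"
    and SA_sym: "is_symmetric_square sA sSA vA"
    \<comment> \<open>multiplication map S^2(A) \<rightarrow> A; I_A is its kernel\<close>
    and mA_lin: "Vector_Spaces.linear sSA sA mA"
    and mA_vA: "\<And>a b. mA (vA a b) = a * b"
    \<comment> \<open>tensor products \<Lambda>^2(A)\<otimes>S^2(k), A\<otimes>\<Lambda>^2(k), S^2(A)\<otimes>\<Lambda>^2(k) (the latter containing I_A\<otimes>\<Lambda>^2(k))\<close>
    and T1_tensor: "is_tensor_product sLA sSK sT1 tens1"
    and T2_tensor: "is_tensor_product sA sLK sT2 tens2"
    and T3_tensor: "is_tensor_product sSA sLK sT3 tens3"
    \<comment> \<open>the maps p1, p2, p3\<close>
    and p1_lin: "Vector_Spaces.linear sW sT1 p1"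
    and p1_def: "\<And>a b x y. p1 (wg (tg a x) (tg b y)) = tens1 (wA a b) (vK x y)"
    and p2_lin: "Vector_Spaces.linear sW sT2 p2"
    and p2_def: "\<And>a b x y. p2 (wg (tg a x) (tg b y)) = tens2 (a * b) (wK x y)"
    and p3_lin: "Vector_Spaces.linear sW sT3 p3"
    and p3_def: "\<And>a b x y. p3 (wg (tg a x) (tg b y)) = tens3 (vA a b - vA (a * b) 1) (wK x y)"
    \<comment> \<open>f1, f2 linear; f3 linear on I_A \<otimes> \<Lambda>^2(k)\<close>
    and f1_lin: "Vector_Spaces.linear sT1 sZ f1"
    and f2_lin: "Vector_Spaces.linear sT2 sZ f2"
    and f3_lin: "linear_on sT3 sZ (module.span sT3 {tens3 c w | c w. mA c = 0}) f3"
  shows "two_cocycle sW sZ wg bg (\<lambda>u. f1 (p1 u) + f2 (p2 u) + f3 (p3 u)) \<longleftrightarrow>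
     ((\<forall>a b. invariant_symmetric_bilinear sK sZ bk (\<lambda>x y. f1 (tens1 (wA a b) (vK x y))))
      \<and> (\<forall>t \<in> T0 sLA wA. \<forall>x y. y \<in> derived_algebra sK bk \<longrightarrow> f1 (tens1 t (vK x y)) = 0)
      \<and> (\<forall>a. d_k bk (\<lambda>x y. f2 (tens2 a (wK x y))) =
              Gamma bk (\<lambda>x y. f1 (tens1 (wA a 1) (vK x y))))
      \<and> (\<forall>c. mA c = 0 \<longrightarrow> (\<forall>x y. y \<in> derived_algebra sK bk \<longrightarrow> f3 (tens3 c (wK x y)) = 0)))"
proof -
  have vsA: "vector_space sA" using A_alg by (simp add: comm_algebra_def)
  have vsK: "vector_space sK" and bk_bil: "bilinear_map sK sK sK bk" and bk_xx: "\<And>x. bk x x = 0"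
    using k_lie unfolding lie_algebra_def by blast+
  have vsG: "vector_space sG" and tg_bil: "bilinear_map sA sK sG tg"
    and g_span: "module.span sG {tg x y |x y. True} = UNIV"
    using g_tensor unfolding is_tensor_product_def by blast+
  have vsW: "vector_space sW" and wg_bil: "bilinear_map sG sG sW wg" and wg_anti: "\<And>x y. wg y x = - wg x y"
    and W_span: "module.span sW {wg x y |x y. True} = UNIV"
    using W_ext unfolding is_exterior_square_def by blast+
  have vsLA: "vector_space sLA" and wA_bil: "bilinear_map sA sA sLA wA" and wA_anti: "\<And>x y. wA y x = - wA x y"
    using LA_ext unfolding is_exterior_square_def by blast+
  have vsSK: "vector_space sSK" and vK_bil: "bilinear_map sK sK sSK vK" and vK_sym: "\<And>x y. vK y x = vK x y"
    using SK_sym unfolding is_symmetric_square_def by blast+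
  have vsLK: "vector_space sLK" and wK_bil: "bilinear_map sK sK sLK wK" and wK_anti: "\<And>x y. wK y x = - wK x y"
    using LK_ext unfolding is_exterior_square_def by blast+
  have vsSA: "vector_space sSA" and vA_bil: "bilinear_map sA sA sSA vA" and vA_sym: "\<And>x y. vA y x = vA x y"
    and SA_span: "module.span sSA {vA x y |x y. True} = UNIV"
    using SA_sym unfolding is_symmetric_square_def by blast+
  have vsT1: "vector_space sT1" and tens1_bil: "bilinear_map sLA sSK sT1 tens1"
    using T1_tensor unfolding is_tensor_product_def by blast+
  have vsT2: "vector_space sT2" and tens2_bil: "bilinear_map sA sLK sT2 tens2"
    using T2_tensor unfolding is_tensor_product_def by blast+
  have vsT3: "vector_space sT3" and tens3_bil: "bilinear_map sSA sLK sT3 tens3"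
    using T3_tensor unfolding is_tensor_product_def by blast+
  have mK: "module sK" using vsK by (simp add: module_iff_vector_space)
  have mW: "module sW" using vsW by (simp add: module_iff_vector_space)
  have mZ: "module sZ" using z_vs by (simp add: module_iff_vector_space)
  have mT3: "module sT3" using vsT3 by (simp add: module_iff_vector_space)
  have mSA: "module sSA" using vsSA by (simp add: module_iff_vector_space)
  have mLA: "module sLA" using vsLA by (simp add: module_iff_vector_space)

  have bk_anti: "\<And>x y. bk y x = - bk x y"
  proof -
    fix x y
    have "bk (x + y) (x + y) = bk x x + bk x y + (bk y x + bk y y)"
      by (simp add: bil_addL[OF bk_bil] bil_addR[OF bk_bil])
    then have "bk x y + bk y x = 0" using bk_xx by simp
    then show "bk y x = - bk x y" by (simp add: eq_neg_iff_add_eq_0 add.commute)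
  qed

  define S3 where "S3 = module.span sT3 {tens3 c w | c w. mA c = 0}"
  obtain F3 where F3_lin: "Vector_Spaces.linear sT3 sZ F3" and F3S: "\<And>x. x \<in> S3 \<Longrightarrow> F3 x = f3 x"
    using linear_on_extend[OF f3_lin vsT3 z_vs] unfolding S3_def by blast
  define U where "U = (\<lambda>a b. vA a b - vA (a * b) 1)"
  have mU: "\<And>a b. mA (U a b) = 0"
    by (simp add: U_def lin_diff[OF mA_lin] mA_vA)
  have U_sym: "\<And>a b. U b a = U a b" by (simp add: U_def vA_sym mult.commute)
  have U_a1: "\<And>a. U a 1 = 0" by (simp add: U_def)
  have U_1a: "\<And>a. U 1 a = 0" by (simp add: U_def vA_sym)
  have S3_sub: "module.subspace sT3 S3" unfolding S3_def using module.subspace_span[OF mT3] by blast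
  have tens3_S3: "\<And>c w. mA c = 0 \<Longrightarrow> tens3 c w \<in> S3"
    unfolding S3_def by (rule module.span_base[OF mT3]) blast
  have p3S: "\<And>u. p3 u \<in> S3"
  proof -
    fix u
    have "p3 (wg v w) \<in> S3" for v w
    proof (rule span_bilin_mem[OF _ _ g_span S3_sub, of "\<lambda>v w. p3 (wg v w)"])
      show "Vector_Spaces.linear sG sT3 (\<lambda>u. p3 (wg u w))" for w
        by (rule lin_comp[OF bil_L[OF wg_bil] p3_lin])
      show "Vector_Spaces.linear sG sT3 (\<lambda>w. p3 (wg u w))" for u
        by (rule lin_comp[OF bil_R[OF wg_bil] p3_lin])
      show "p3 (wg g h) \<in> S3" if "g \<in> {tg x y |x y. True}" "h \<in> {tg x y |x y. True}" for g h
        using that tens3_S3[OF mU] by (auto simp: p3_def U_def)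
    qed
    then show "p3 u \<in> S3"
      using span_lin_mem[OF p3_lin W_span S3_sub] by blast
  qed
  define ff where "ff = (\<lambda>u. f1 (p1 u) + f2 (p2 u) + F3 (p3 u))"
  have ff_eq: "(\<lambda>u. f1 (p1 u) + f2 (p2 u) + f3 (p3 u)) = ff"
    unfolding ff_def using F3S p3S by simp
  have ff_lin: "Vector_Spaces.linear sW sZ ff"
    unfolding ff_def
    by (intro lin_plus lin_comp[OF p1_lin f1_lin] lin_comp[OF p2_lin f2_lin] lin_comp[OF p3_lin F3_lin])
  define \<beta> where "\<beta> = (\<lambda>t x y. f1 (tens1 t (vK x y)))"
  define \<eta> where "\<eta> = (\<lambda>a x y. f2 (tens2 a (wK x y)))"
  define \<gamma> where "\<gamma> = (\<lambda>c x y. F3 (tens3 c (wK x y)))"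
  define D where "D = (\<lambda>u v w. wg (bg u v) w + wg (bg v w) u + wg (bg w u) v)"
  have ff_gen: "\<And>a b x y. ff (wg (tg a x) (tg b y)) = \<beta> (wA a b) x y + \<eta> (a * b) x y + \<gamma> (U a b) x y"
    by (simp add: ff_def p1_def p2_def p3_def \<beta>_def \<eta>_def \<gamma>_def U_def)
  have EE: "ff (D (tg a x) (tg b y) (tg c z)) =
      \<beta> (wA (a*b) c) (bk x y) z + \<eta> (a*b*c) (bk x y) z + \<gamma> (U (a*b) c) (bk x y) z
    + \<beta> (wA (b*c) a) (bk y z) x + \<eta> (a*b*c) (bk y z) x + \<gamma> (U (b*c) a) (bk y z) x
    + \<beta> (wA (c*a) b) (bk z x) y + \<eta> (a*b*c) (bk z x) y + \<gamma> (U (c*a) b) (bk z x) y" for a b c x y z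
  proof -
    have "D (tg a x) (tg b y) (tg c z) = wg (tg (a*b) (bk x y)) (tg c z) + wg (tg (b*c) (bk y z)) (tg a x)
       + wg (tg (c*a) (bk z x)) (tg b y)" by (simp add: D_def bg_tg)
    then have "ff (D (tg a x) (tg b y) (tg c z)) = ff (wg (tg (a*b) (bk x y)) (tg c z)) + ff (wg (tg (b*c) (bk y z)) (tg a x))
       + ff (wg (tg (c*a) (bk z x)) (tg b y))" by (simp add: lin_add[OF ff_lin])
    moreover have "b*c*a = a*b*c" "c*a*b = a*b*c" by (simp_all add: mult_ac)
    ultimately show ?thesis by (simp only: ff_gen add.assoc)
  qed
  have Dlin1: "Vector_Spaces.linear sG sZ (\<lambda>u. ff (D u v w))" for v w
  proof -
    have eq: "(\<lambda>u. ff (D u v w)) = (\<lambda>u. (ff (wg (bg u v) w) + ff (wg (bg v w) u)) + ff (wg (bg w u) v))"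
      by (simp add: D_def lin_add[OF ff_lin])
    show ?thesis unfolding eq
      by (intro lin_plus lin_comp[OF lin_comp[OF bil_L[OF bg_bil] bil_L[OF wg_bil]] ff_lin]
          lin_comp[OF bil_R[OF wg_bil] ff_lin] lin_comp[OF lin_comp[OF bil_R[OF bg_bil] bil_L[OF wg_bil]] ff_lin])
  qed
  have Dlin2: "Vector_Spaces.linear sG sZ (\<lambda>v. ff (D u v w))" for u w
  proof -
    have eq: "(\<lambda>v. ff (D u v w)) = (\<lambda>v. (ff (wg (bg u v) w) + ff (wg (bg v w) u)) + ff (wg (bg w u) v))"
      by (simp add: D_def lin_add[OF ff_lin])
    show ?thesis unfolding eq
      by (intro lin_plus lin_comp[OF lin_comp[OF bil_R[OF bg_bil] bil_L[OF wg_bil]] ff_lin]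
          lin_comp[OF lin_comp[OF bil_L[OF bg_bil] bil_L[OF wg_bil]] ff_lin] lin_comp[OF bil_R[OF wg_bil] ff_lin])
  qed
  have Dlin3: "Vector_Spaces.linear sG sZ (\<lambda>w. ff (D u v w))" for u v
  proof -
    have eq: "(\<lambda>w. ff (D u v w)) = (\<lambda>w. (ff (wg (bg u v) w) + ff (wg (bg v w) u)) + ff (wg (bg w u) v))"
      by (simp add: D_def lin_add[OF ff_lin])
    show ?thesis unfolding eq
      by (intro lin_plus lin_comp[OF bil_R[OF wg_bil] ff_lin]
          lin_comp[OF lin_comp[OF bil_R[OF bg_bil] bil_L[OF wg_bil]] ff_lin]
          lin_comp[OF lin_comp[OF bil_L[OF bg_bil] bil_L[OF wg_bil]] ff_lin])
  qed
  define HE where "HE = (\<forall>a b c x y z.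
      \<beta> (wA (a*b) c) (bk x y) z + \<eta> (a*b*c) (bk x y) z + \<gamma> (U (a*b) c) (bk x y) z
    + \<beta> (wA (b*c) a) (bk y z) x + \<eta> (a*b*c) (bk y z) x + \<gamma> (U (b*c) a) (bk y z) x
    + \<beta> (wA (c*a) b) (bk z x) y + \<eta> (a*b*c) (bk z x) y + \<gamma> (U (c*a) b) (bk z x) y = 0)"
  have cocycle_iff: "two_cocycle sW sZ wg bg ff \<longleftrightarrow> HE"
  proof
    assume "two_cocycle sW sZ wg bg ff"
    then have B0: "\<forall>u\<in>B2 sW wg bg. ff u = 0" by (simp add: two_cocycle_def)
    have Dmem: "D (tg a x) (tg b y) (tg c z) \<in> B2 sW wg bg" for a b c x y z
      unfolding B2_def D_def by (rule module.span_base[OF mW]) blast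
    show HE unfolding HE_def
    proof (intro allI)
      fix a b c x y z
      have "ff (D (tg a x) (tg b y) (tg c z)) = 0" using bspec[OF B0 Dmem] .
      then show "\<beta> (wA (a*b) c) (bk x y) z + \<eta> (a*b*c) (bk x y) z + \<gamma> (U (a*b) c) (bk x y) z
    + \<beta> (wA (b*c) a) (bk y z) x + \<eta> (a*b*c) (bk y z) x + \<gamma> (U (b*c) a) (bk y z) x
    + \<beta> (wA (c*a) b) (bk z x) y + \<eta> (a*b*c) (bk z x) y + \<gamma> (U (c*a) b) (bk z x) y = 0"
        unfolding EE .
    qed
  next
    assume HE0: HE
    have Dz: "ff (D u v w) \<in> {0}" for u v w
    proof (rule span_trilin_mem[OF Dlin1 Dlin2 Dlin3 g_span module.subspace_single_0[OF mZ]])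
      fix g h k assume "g \<in> {tg x y |x y. True}" "h \<in> {tg x y |x y. True}" "k \<in> {tg x y |x y. True}"
      then obtain a1 x1 a2 x2 a3 x3 where "g = tg a1 x1" "h = tg a2 x2" "k = tg a3 x3" by blast
      moreover have "ff (D (tg a1 x1) (tg a2 x2) (tg a3 x3)) = 0"
        unfolding EE using HE0 unfolding HE_def by blast
      ultimately show "ff (D g h k) \<in> {0}" by simp
    qed
    have "\<forall>u\<in>B2 sW wg bg. ff u = 0"
    proof
      fix u assume "u \<in> B2 sW wg bg"
      then have u: "u \<in> module.span sW {D u v w | u v w. True}" unfolding B2_def D_def .
      show "ff u = 0"
      proof (rule span_lin_zero[OF ff_lin u])
        fix g assume "g \<in> {D u v w | u v w. True}"
        then show "ff g = 0" using Dz by blast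
      qed
    qed
    then show "two_cocycle sW sZ wg bg ff" using ff_lin by (simp add: two_cocycle_def)
  qed
  have \<beta>_lint: "Vector_Spaces.linear sLA sZ (\<lambda>t. \<beta> t x y)" for x y
    unfolding \<beta>_def by (rule lin_comp[OF bil_L[OF tens1_bil] f1_lin])
  have \<beta>_linR: "Vector_Spaces.linear sK sZ (\<lambda>y. \<beta> t x y)" for t x
    unfolding \<beta>_def by (rule lin_comp[OF bil_R[OF vK_bil] lin_comp[OF bil_R[OF tens1_bil] f1_lin]])
  have \<beta>_linL: "Vector_Spaces.linear sK sZ (\<lambda>x. \<beta> t x y)" for t y
    unfolding \<beta>_def by (rule lin_comp[OF bil_L[OF vK_bil] lin_comp[OF bil_R[OF tens1_bil] f1_lin]])
  have \<gamma>_linc: "Vector_Spaces.linear sSA sZ (\<lambda>c. \<gamma> c x y)" for x y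
    unfolding \<gamma>_def by (rule lin_comp[OF bil_L[OF tens3_bil] F3_lin])
  have \<gamma>_linR: "Vector_Spaces.linear sK sZ (\<lambda>y. \<gamma> c x y)" for c x
    unfolding \<gamma>_def by (rule lin_comp[OF bil_R[OF wK_bil] lin_comp[OF bil_R[OF tens3_bil] F3_lin]])
  have \<beta>_add: "\<beta> (t1 + t2) x y = \<beta> t1 x y + \<beta> t2 x y" for t1 t2 x y
    using lin_add[OF \<beta>_lint] by simp
  have \<beta>_diff: "\<beta> (t1 - t2) x y = \<beta> t1 x y - \<beta> t2 x y" for t1 t2 x y
    using lin_diff[OF \<beta>_lint] by simp
  have \<beta>_swap: "\<beta> (wA b a) x y = - \<beta> (wA a b) x y" for a b x y
    using lin_neg[OF \<beta>_lint] wA_anti[of a b] by simp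
  have \<beta>_sym: "\<beta> t y x = \<beta> t x y" for t x y
    unfolding \<beta>_def using vK_sym[of x y] by simp
  have \<eta>_negL: "\<eta> a (- x) y = - \<eta> a x y" for a x y
    unfolding \<eta>_def by (simp add: bil_negL[OF wK_bil] bil_negR[OF tens2_bil] lin_neg[OF f2_lin])
  have \<gamma>_zero: "\<gamma> 0 x y = 0" for x y
    using lin_zero[OF \<gamma>_linc] by simp
  have \<gamma>_swap: "\<gamma> c y x = - \<gamma> c x y" for c x y
    unfolding \<gamma>_def using wK_anti[of x y] by (simp add: bil_negR[OF tens3_bil] lin_neg[OF F3_lin])
  have bk_der: "bk x y \<in> derived_algebra sK bk" for x y
    unfolding derived_algebra_def by (rule module.span_base[OF mK]) blast
  have T0_mem: "wA (a*b) c + wA (b*c) a + wA (c*a) b - wA (a*b*c) 1 \<in> T0 sLA wA" for a b c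
    unfolding T0_def by (rule module.span_base[OF mLA]) blast
  have Uspan: "c \<in> module.span sSA {U a b | a b. True}" if "mA c = 0" for c
  proof -
    have Lc: "Vector_Spaces.linear sSA sSA (\<lambda>c. c - vA (mA c) 1)"
      unfolding Vector_Spaces.linear_iff
      by (simp add: vsSA lin_add[OF mA_lin] lin_scale[OF mA_lin] bil_addL[OF vA_bil] bil_scaleL[OF vA_bil]
          module.scale_right_diff_distrib[OF mSA])
    have "c - vA (mA c) 1 \<in> module.span sSA {U a b | a b. True}"
    proof (rule span_lin_mem[OF Lc SA_span module.subspace_span[OF mSA]])
      fix g assume "g \<in> {vA x y |x y. True}"
      then obtain a b where "g = vA a b" by blast
      then show "g - vA (mA g) 1 \<in> module.span sSA {U a b | a b. True}"
        by (simp add: mA_vA) (rule module.span_base[OF mSA], auto simp: U_def)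
    qed
    then show ?thesis using that by (simp add: bil_zeroL[OF vA_bil])
  qed
  define CA where "CA = (\<forall>a b. invariant_symmetric_bilinear sK sZ bk (\<beta> (wA a b)))"
  have rot: "\<beta> (wA p q) (bk y z) x = \<beta> (wA p q) (bk x y) z \<and> \<beta> (wA p q) (bk z x) y = \<beta> (wA p q) (bk x y) z"
    if CA for p q x y z
  proof -
    have inv: "\<beta> (wA p q) (bk u v) w = \<beta> (wA p q) u (bk v w)" for u v w
      using that unfolding CA_def invariant_symmetric_bilinear_def by blast
    show ?thesis using inv[of x y z] inv[of z x y] \<beta>_sym by metis
  qed
  define CB where "CB = (\<forall>t \<in> T0 sLA wA. \<forall>x y. y \<in> derived_algebra sK bk \<longrightarrow> \<beta> t x y = 0)"
  define CC where "CC = (\<forall>a. d_k bk (\<eta> a) = Gamma bk (\<beta> (wA a 1)))"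
  define CD where "CD = (\<forall>c. mA c = 0 \<longrightarrow> (\<forall>x y. y \<in> derived_algebra sK bk \<longrightarrow> \<gamma> c x y = 0))"
  have fwd: "CA \<and> CB \<and> CC \<and> CD" if HE0: HE
  proof -
    note HEi = HE0[unfolded HE_def, rule_format]
    have C1: "\<beta> (wA a 1) (bk x y) z + (\<eta> a (bk x y) z + \<eta> a (bk y z) x + \<eta> a (bk z x) y) = 0" for a x y z
    proof -
      let ?V = "\<beta> (wA a 1) (bk x y) z + (\<eta> a (bk x y) z + \<eta> a (bk y z) x + \<eta> a (bk z x) y)"
      have "?V + ?V = 0"
        by (rule zero2[OF HEi[of a 1 1 x y z] HEi[of 1 a 1 x y z]])
           (simp add: U_a1 U_1a \<gamma>_zero \<beta>_swap[where a=a and b=1] algebra_simps)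
      then show ?thesis by (rule half_zero[OF z_vs two_unit])
    qed
    have rel: "\<beta> (wA a b) (bk z x) y = \<beta> (wA a b) (bk y z) x" for a b x y z
    proof -
      let ?V = "\<beta> (wA a b) (bk z x) y - \<beta> (wA a b) (bk y z) x"
      have "?V + ?V = 0"
        by (rule zero2m[OF HEi[of a b 1 x y z] HEi[of b a 1 x y z]])
           (simp add: U_a1 U_sym[where a=a and b=b] \<gamma>_zero \<beta>_swap[where a=a and b=b] mult.commute[of b a] algebra_simps)
      then have "?V = 0" by (rule half_zero[OF z_vs two_unit])
      then show ?thesis by simp
    qed
    have CA unfolding CA_def invariant_symmetric_bilinear_def
    proof (intro allI conjI)
      fix a b
      show "bilinear_map sK sK sZ (\<beta> (wA a b))"
        unfolding bilinear_map_def using \<beta>_linR \<beta>_linL by blast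
      show "\<beta> (wA a b) x y = \<beta> (wA a b) y x" for x y using \<beta>_sym by metis
      show "\<beta> (wA a b) (bk x y) z = \<beta> (wA a b) x (bk y z)" for x y z
        using rel[where a=a and b=b and x=z and y=x and z=y] \<beta>_sym by metis
    qed
    have CC unfolding CC_def
    proof (intro allI ext)
      fix a x y z
      show "d_k bk (\<eta> a) x y z = Gamma bk (\<beta> (wA a 1)) x y z"
        unfolding d_k_def Gamma_def
        by (rule eq_byn[OF C1[of a x y z]]) (simp add: bk_anti[where x=z and y=x] \<eta>_negL algebra_simps)
    qed
    have CDgen: "\<gamma> (U a b) (bk x y) z = 0" for a b x y z
    proof -
      have \<rho>: "\<gamma> (U a b) (bk y z) x + \<gamma> (U a b) (bk z x) y = 0" for x y z
      proof -
        let ?V = "\<gamma> (U a b) (bk y z) x + \<gamma> (U a b) (bk z x) y"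
        have "?V + ?V = 0"
          by (rule zero3c[OF HEi[of a b 1 x y z] HEi[of b a 1 x y z] C1[of "a*b" x y z]])
             (simp add: U_a1 U_sym[where a=a and b=b] \<gamma>_zero \<beta>_swap[where a=a and b=b] mult.commute[of b a] algebra_simps)
        then show ?thesis by (rule half_zero[OF z_vs two_unit])
      qed
      have "\<gamma> (U a b) (bk x y) z + \<gamma> (U a b) (bk x y) z = 0"
        by (rule zero3[OF \<rho>[where x=z and y=x and z=y] \<rho>[where x=y and y=z and z=x] \<rho>[where x=x and y=y and z=z]])
           (simp add: algebra_simps)
      then show ?thesis by (rule half_zero[OF z_vs two_unit])
    qed
    have CBgen: "\<beta> (wA (a*b) c + wA (b*c) a + wA (c*a) b - wA (a*b*c) 1) (bk x y) z = 0" for a b c x y z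
      by (rule zero2m[OF HEi[of a b c x y z] C1[of "a*b*c" x y z]])
         (simp add: \<beta>_add \<beta>_diff rot[OF \<open>CA\<close>, where x=x and y=y and z=z] CDgen algebra_simps)
    have CB unfolding CB_def
    proof (intro ballI allI impI)
      fix t x y assume t: "t \<in> T0 sLA wA" and y: "y \<in> derived_algebra sK bk"
      have tgen: "\<beta> T x y = 0" if Tm: "T \<in> {wA (a * b) c + wA (b * c) a + wA (c * a) b - wA (a * b * c) 1 | a b c. True}" for T
      proof -
        obtain a b c where T: "T = wA (a * b) c + wA (b * c) a + wA (c * a) b - wA (a * b * c) 1" using Tm by blast
        show ?thesis
        proof (rule span_lin_zero[OF \<beta>_linR y[unfolded derived_algebra_def]])
          fix g assume "g \<in> {bk x y |x y. True}"
          then obtain u v where "g = bk u v" by blast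
          then show "\<beta> T x g = 0" using CBgen[of a b c u v x] \<beta>_sym T by metis
        qed
      qed
      show "\<beta> t x y = 0"
        by (rule span_lin_zero[OF \<beta>_lint t[unfolded T0_def]]) (rule tgen)
    qed
    have CD unfolding CD_def
    proof (intro allI impI)
      fix c x y assume c: "mA c = 0" and y: "y \<in> derived_algebra sK bk"
      show "\<gamma> c x y = 0"
      proof (rule span_lin_zero[OF \<gamma>_linc Uspan[OF c]])
        fix g assume "g \<in> {U a b | a b. True}"
        then obtain a b where g: "g = U a b" by blast
        show "\<gamma> g x y = 0"
        proof (rule span_lin_zero[OF \<gamma>_linR y[unfolded derived_algebra_def]])
          fix h assume "h \<in> {bk x y |x y. True}"
          then obtain u v where "h = bk u v" by blast
          then show "\<gamma> g x h = 0" using CDgen[of a b u v x] \<gamma>_swap g by (metis neg_equal_0_iff_equal)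
        qed
      qed
    qed
    show ?thesis using \<open>CA\<close> \<open>CB\<close> \<open>CC\<close> \<open>CD\<close> by blast
  qed
  have bwd: HE if CA CB CC CD
  proof -
    have \<gamma>0: "\<gamma> (U p q) (bk u v) w = 0" for p q u v w
    proof -
      have "\<gamma> (U p q) w (bk u v) = 0"
        using \<open>CD\<close> mU[of p q] bk_der[of u v] unfolding CD_def by blast
      then show ?thesis using \<gamma>_swap by (metis neg_equal_0_iff_equal)
    qed
    show HE unfolding HE_def
    proof (intro allI)
      fix a b c x y z
      have Bz: "\<beta> (wA (a*b) c + wA (b*c) a + wA (c*a) b - wA (a*b*c) 1) (bk x y) z = 0"
        using \<open>CB\<close> T0_mem[of a b c] bk_der[of x y] \<beta>_sym unfolding CB_def by metis
      have Cz: "d_k bk (\<eta> (a*b*c)) x y z - Gamma bk (\<beta> (wA (a*b*c) 1)) x y z = 0"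
        using \<open>CC\<close> unfolding CC_def by simp
      show "\<beta> (wA (a*b) c) (bk x y) z + \<eta> (a*b*c) (bk x y) z + \<gamma> (U (a*b) c) (bk x y) z
    + \<beta> (wA (b*c) a) (bk y z) x + \<eta> (a*b*c) (bk y z) x + \<gamma> (U (b*c) a) (bk y z) x
    + \<beta> (wA (c*a) b) (bk z x) y + \<eta> (a*b*c) (bk z x) y + \<gamma> (U (c*a) b) (bk z x) y = 0"
        by (rule zero2m[OF Bz Cz])
           (simp add: d_k_def Gamma_def \<beta>_add \<beta>_diff rot[OF \<open>CA\<close>, where x=x and y=y and z=z] \<gamma>0
             bk_anti[where x=z and y=x] \<eta>_negL algebra_simps)
    qed
  qed
  have main: "HE \<longleftrightarrow> CA \<and> CB \<and> CC \<and> CD" using fwd bwd by blast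
  have "two_cocycle sW sZ wg bg (\<lambda>u. f1 (p1 u) + f2 (p2 u) + f3 (p3 u)) \<longleftrightarrow> CA \<and> CB \<and> CC \<and> CD"
    unfolding ff_eq cocycle_iff main ..
  then show ?thesis
    unfolding CA_def CB_def CC_def CD_def \<beta>_def \<eta>_def \<gamma>_def using F3S tens3_S3 by simp
qed

end
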